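(* Assume $\operatorname{add}(\mathcal N)=\operatorname{cov}(\mathcal N)$. Then $\mathcal{ANM}_{\operatorname{add}(\mathcal N)}\setminus\mathcal{ND}_{\operatorname{add}(\mathcal N)}$ is $2^{\mathfrak c}$-coneable in $\left(\mathbb R^{[0,1]}\right)^{\operatorname{add}(\mathcal N)}$.
   Context: For a regular infinite cardinal $\kappa$, a $\kappa$-sequence $(x_\alpha)_{\alpha<\kappa}$ converges to $x$ if for every neighbourhood $U$ of $x$ there is $\alpha_0<\kappa$ with $x_\alpha\in U$ for all $\alpha_0<\alpha<\kappa$; $\left(\mathbb R^{[0,1]}\right)^{\kappa}$ is the real vector space of $\kappa$-sequences of functions $[0,1]\to\mathbb R$ with indexwise operations. $\lambda$ is Lebesgue measure, $\mathcal N$ the null subsets of $[0,1]$; $\operatorname{add}(\mathcal N)$ the least cardinality of a family of null sets with non-null union, $\operatorname{cov}(\mathcal N)$ the least cardinality of a family of null sets covering $[0,1]$. $\mathcal{ANM}_{\kappa}$: $\kappa$-sequences of Lebesgue measurable $f_\alpha:[0,1]\to\mathbb R$ converging a.e. to a measurable $f$ but not converging in measure to $f$. $\mathcal{ND}_{\kappa}$: $\kappa$-sequences of Lebesgue measurable $f_\alpha:[0,1]\to\mathbb R$ dominated a.e. by a common integrable $g$, converging a.e. to an integrable $f$, with $\int|f_\alpha-f|\,d\lambda\not\to0$. $S$ is $\mu$-coneable if there are linearly independent sets $B_+,B_-\subset S$ of cardinality $\mu$ such that all finite combinations of elements of $B_+$ with positive coefficients, and all finite combinations of elements of $B_-$ with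 negative coefficients, lie in $S$. *)

theory Defs
  imports "HOL-Analysis.Analysis"
begin

abbreviation L01 :: "real measure" where
  "L01 \<equiv> lebesgue_on {0..1}"

definition nullN :: "real set set" where
  "nullN = {A. A \<subseteq> {0..1} \<and> A \<in> null_sets lebesgue}"

text \<open>The index set I has cardinality add(N).\<close>
definition is_addN :: "'i set \<Rightarrow> bool" where
  "is_addN I \<longleftrightarrow>
     (\<exists>\<F>. \<F> \<subseteq> nullN \<and> \<Union>\<F> \<notin> nullN \<and> (card_of \<F>, card_of I) \<in> ordIso) \<and>
     (\<forall>\<F>. \<F> \<subseteq> nullN \<and> \<Union>\<F> \<notin> nullN \<longrightarrow> (card_of I, card_of \<F>) \<in> ordLeq)"

text \<open>The index set I has cardinality cov(N).\<close>
definition is_covN :: "'i set \<Rightarrow> bool" where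
  "is_covN I \<longleftrightarrow>
     (\<exists>\<F>. \<F> \<subseteq> nullN \<and> \<Union>\<F> = {0..1} \<and> (card_of \<F>, card_of I) \<in> ordIso) \<and>
     (\<forall>\<F>. \<F> \<subseteq> nullN \<and> \<Union>\<F> = {0..1} \<longrightarrow> (card_of I, card_of \<F>) \<in> ordLeq)"

definition kconv :: "'i rel \<Rightarrow> ('i \<Rightarrow> 'b::topological_space) \<Rightarrow> 'b \<Rightarrow> bool" where
  "kconv \<kappa> y l \<longleftrightarrow>
     (\<forall>U. open U \<and> l \<in> U \<longrightarrow>
        (\<exists>\<alpha>0\<in>Field \<kappa>. \<forall>\<alpha>\<in>Field \<kappa>. (\<alpha>0, \<alpha>) \<in> \<kappa> \<and> \<alpha> \<noteq> \<alpha>0 \<longrightarrow> y \<alpha> \<in> U))"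

definition kconv_ae :: "'i rel \<Rightarrow> ('i \<Rightarrow> real \<Rightarrow> real) \<Rightarrow> (real \<Rightarrow> real) \<Rightarrow> bool" where
  "kconv_ae \<kappa> F f \<longleftrightarrow> (AE x in L01. kconv \<kappa> (\<lambda>\<alpha>. F \<alpha> x) (f x))"

definition kconv_meas :: "'i rel \<Rightarrow> ('i \<Rightarrow> real \<Rightarrow> real) \<Rightarrow> (real \<Rightarrow> real) \<Rightarrow> bool" where
  "kconv_meas \<kappa> F f \<longleftrightarrow>
     (\<forall>\<epsilon>>0. kconv \<kappa> (\<lambda>\<alpha>. measure L01 {x \<in> space L01. \<epsilon> \<le> \<bar>F \<alpha> x - f x\<bar>}) 0)"

definition ANM :: "'i rel \<Rightarrow> ('i \<Rightarrow> real \<Rightarrow> real) set" where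
  "ANM \<kappa> = {F. (\<forall>\<alpha>\<in>Field \<kappa>. F \<alpha> \<in> borel_measurable L01) \<and>
                 (\<exists>f \<in> borel_measurable L01. kconv_ae \<kappa> F f \<and> \<not> kconv_meas \<kappa> F f)}"

definition ND :: "'i rel \<Rightarrow> ('i \<Rightarrow> real \<Rightarrow> real) set" where
  "ND \<kappa> = {F. (\<forall>\<alpha>\<in>Field \<kappa>. F \<alpha> \<in> borel_measurable L01) \<and>
                (\<exists>g. integrable L01 g \<and> (\<forall>\<alpha>\<in>Field \<kappa>. AE x in L01. \<bar>F \<alpha> x\<bar> \<le> g x)) \<and>
                (\<exists>f. integrable L01 f \<and> kconv_ae \<kappa> F f \<and>
                     \<not> kconv \<kappa> (\<lambda>\<alpha>. LINT x|L01. \<bar>F \<alpha> x - f x\<bar>) 0)}"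

text \<open>The vector space (R^[0,1])^kappa, realised as extensional functions
  (zero outside Field kappa and outside [0,1]).\<close>
definition seq_space :: "'i rel \<Rightarrow> ('i \<Rightarrow> real \<Rightarrow> real) set" where
  "seq_space \<kappa> = {F. \<forall>\<alpha> x. (\<alpha> \<notin> Field \<kappa> \<or> x \<notin> {0..1}) \<longrightarrow> F \<alpha> x = 0}"

definition lincomb :: "(('i \<Rightarrow> real \<Rightarrow> real) \<Rightarrow> real) \<Rightarrow> ('i \<Rightarrow> real \<Rightarrow> real) set
                        \<Rightarrow> ('i \<Rightarrow> real \<Rightarrow> real)" where
  "lincomb c A = (\<lambda>\<alpha> x. \<Sum>b\<in>A. c b * b \<alpha> x)"

definition lin_indep :: "('i \<Rightarrow> real \<Rightarrow> real) set \<Rightarrow> bool" where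
  "lin_indep B \<longleftrightarrow> (\<forall>A c. finite A \<and> A \<subseteq> B \<and> lincomb c A = (\<lambda>\<alpha> x. 0) \<longrightarrow> (\<forall>b\<in>A. c b = 0))"

text \<open>mu-coneability of S in the space seq_space kappa, mu given by a set of that cardinality.\<close>
definition coneable :: "'c set \<Rightarrow> 'i rel \<Rightarrow> ('i \<Rightarrow> real \<Rightarrow> real) set \<Rightarrow> bool" where
  "coneable M \<kappa> S \<longleftrightarrow>
     (\<exists>Bp Bm. Bp \<subseteq> seq_space \<kappa> \<and> Bm \<subseteq> seq_space \<kappa> \<and>
        lin_indep Bp \<and> lin_indep Bm \<and>
        (card_of Bp, card_of M) \<in> ordIso \<and> (card_of Bm, card_of M) \<in> ordIso \<and>
        (\<forall>A c. finite A \<and> A \<noteq> {} \<and> A \<subseteq> Bp \<and> (\<forall>b\<in>A. c b > 0) \<longrightarrow> lincomb c A \<in> S) \<and>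
        (\<forall>A c. finite A \<and> A \<noteq> {} \<and> A \<subseteq> Bm \<and> (\<forall>b\<in>A. c b < 0) \<longrightarrow> lincomb c A \<in> S))"

end

theory Submission
  imports Defs
begin


lemma card_part:
  fixes \<kappa> :: "'i rel"
  assumes co: "card_order_on (Field \<kappa>) \<kappa>"
    and ad: "is_addN (Field \<kappa>)"
    and cv: "is_covN (Field \<kappa>)"
  obtains g where "\<And>\<alpha>. \<alpha> \<in> Field \<kappa> \<Longrightarrow> g \<alpha> \<in> nullN"
    "\<Union>(g ` Field \<kappa>) = {0..1}"
    "\<And>\<alpha>. \<alpha> \<in> Field \<kappa> \<Longrightarrow> \<Union>(g ` underS \<kappa> \<alpha>) \<in> nullN"
    "Field \<kappa> \<noteq> {}"
    "\<And>\<alpha>. \<alpha> \<in> Field \<kappa> \<Longrightarrow> \<exists>\<beta>\<in>Field \<kappa>. \<alpha> \<noteq> \<beta> \<and> (\<alpha>,\<beta>) \<in> \<kappa>"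
proof -
  from cv obtain Fc where Fc: "Fc \<subseteq> nullN" "\<Union>Fc = {0..1}" "(card_of Fc, card_of (Field \<kappa>)) \<in> ordIso"
    unfolding is_covN_def by blast
  then have "(card_of (Field \<kappa>), card_of Fc) \<in> ordIso" using ordIso_symmetric by blast
  then obtain g where g: "bij_betw g (Field \<kappa>) Fc" using card_of_ordIso by blast
  from ad obtain Fa where Fa: "Fa \<subseteq> nullN" "\<Union>Fa \<notin> nullN" "(card_of Fa, card_of (Field \<kappa>)) \<in> ordIso"
    unfolding is_addN_def by blast
  have inf: "infinite (Field \<kappa>)"
  proof
    assume "finite (Field \<kappa>)"
    then have "finite Fa" using Fa(3) card_of_ordIso_finite by blast
    then have "countable Fa" by (rule countable_finite)
    have "\<Union>Fa = (\<Union>A\<in>Fa. A)" by simp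
    also have "\<dots> \<in> null_sets lebesgue"
      using \<open>countable Fa\<close> Fa(1) by (intro null_sets_UN') (auto simp: nullN_def)
    finally have "\<Union>Fa \<in> nullN" using Fa(1) by (auto simp: nullN_def)
    with Fa(2) show False by blast
  qed
  show ?thesis
  proof
    fix \<alpha> assume "\<alpha> \<in> Field \<kappa>" then show "g \<alpha> \<in> nullN" using g Fc(1) by (auto simp: bij_betw_def)
  next
    show "\<Union>(g ` Field \<kappa>) = {0..1}" using g Fc(2) by (simp add: bij_betw_def)
  next
    fix \<alpha> assume a: "\<alpha> \<in> Field \<kappa>"
    let ?G = "g ` underS \<kappa> \<alpha>"
    have sub: "underS \<kappa> \<alpha> \<subseteq> Field \<kappa>" by (auto simp: underS_def Field_def)
    have Gn: "?G \<subseteq> nullN" using g Fc(1) sub by (auto simp: bij_betw_def)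
    show "\<Union>?G \<in> nullN"
    proof (rule ccontr)
      assume "\<Union>?G \<notin> nullN"
      with ad Gn have 1: "(card_of (Field \<kappa>), card_of ?G) \<in> ordLeq" unfolding is_addN_def by blast
      have 2: "(card_of ?G, card_of (underS \<kappa> \<alpha>)) \<in> ordLeq" by (rule card_of_image)
      have 3: "(card_of (underS \<kappa> \<alpha>), \<kappa>) \<in> ordLess" by (rule card_of_underS[OF co a])
      have 4: "(\<kappa>, card_of (Field \<kappa>)) \<in> ordIso" by (rule ordIso_symmetric[OF card_of_Field_ordIso[OF co]])
      have "(card_of (Field \<kappa>), card_of (Field \<kappa>)) \<in> ordLess"
        by (rule ordLess_ordIso_trans[OF ordLeq_ordLess_trans[OF ordLeq_transitive[OF 1 2] 3] 4])
      then show False using not_ordLess_ordIso card_of_refl by metis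
    qed
  next
    show "Field \<kappa> \<noteq> {}" using inf finite.emptyI by metis
  next
    fix \<alpha> assume "\<alpha> \<in> Field \<kappa>"
    then show "\<exists>\<beta>\<in>Field \<kappa>. \<alpha> \<noteq> \<beta> \<and> (\<alpha>,\<beta>) \<in> \<kappa>" by (rule infinite_Card_order_limit[OF co inf])
  qed
qed



definition wt :: "nat \<Rightarrow> real" where "wt i = (1/3)^Suc i"
definition fA :: "nat set \<Rightarrow> nat \<Rightarrow> real" where "fA A i = (if i \<in> A then wt i else 0)"
definition sig :: "nat set \<Rightarrow> real" where "sig A = suminf (fA A)"

lemma wt_shift: "wt (i + n) = (1/3)^Suc n * (1/3)^i"
  by (simp add: wt_def power_add)

lemma summable_wt_shift: "summable (\<lambda>i. wt (i + n))"
  unfolding wt_shift by (intro summable_mult summable_geometric) simp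

lemma suminf_wt_shift: "(\<Sum>i. wt (i + n)) = (1/3)^n / 2"
proof -
  have "(\<Sum>i. wt (i + n)) = (1/3)^Suc n * (\<Sum>i. (1/3::real)^i)"
    unfolding wt_shift by (intro suminf_mult summable_geometric) simp
  also have "(\<Sum>i. (1/3::real)^i) = 3/2" by (subst suminf_geometric) auto
  finally show ?thesis by simp
qed

lemma fA_nonneg: "0 \<le> fA A i" by (simp add: fA_def wt_def)
lemma fA_le: "fA A i \<le> wt i" by (simp add: fA_def wt_def)

lemma summable_fA_shift: "summable (\<lambda>i. fA A (i + n))"
  by (rule summable_comparison_test[OF _ summable_wt_shift[of n]])
     (use fA_nonneg fA_le in auto)

lemma summable_fA: "summable (fA A)"
  using summable_fA_shift[of A 0] by simp

lemma tail_bounds: "0 \<le> (\<Sum>i. fA A (i + n))" "(\<Sum>i. fA A (i + n)) \<le> (1/3)^n / 2"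
proof -
  show "0 \<le> (\<Sum>i. fA A (i + n))" by (intro suminf_nonneg summable_fA_shift fA_nonneg)
  have "(\<Sum>i. fA A (i + n)) \<le> (\<Sum>i. wt (i + n))"
    by (intro suminf_le summable_fA_shift summable_wt_shift fA_le)
  then show "(\<Sum>i. fA A (i + n)) \<le> (1/3)^n / 2" by (simp add: suminf_wt_shift)
qed

lemma sig_split: "sig A = (\<Sum>i. fA A (i + n)) + (\<Sum>i<n. fA A i)"
  unfolding sig_def by (rule suminf_split_initial_segment[OF summable_fA])

lemma sig_01: "sig A \<in> {0..1}"
  using tail_bounds[of A 0] sig_split[of A 0] by simp

lemma sig_less:
  assumes "k \<in> A" "k \<notin> B" "\<And>i. i < k \<Longrightarrow> (i \<in> A) = (i \<in> B)"
  shows "sig B < sig A"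
proof -
  have eq: "(\<Sum>i<k. fA A i) = (\<Sum>i<k. fA B i)"
    by (intro sum.cong) (auto simp: fA_def assms(3))
  have A: "sig A = (\<Sum>i. fA A (i + Suc k)) + (\<Sum>i<k. fA A i) + wt k"
    using sig_split[of A "Suc k"] assms(1) by (simp add: fA_def)
  have B: "sig B = (\<Sum>i. fA B (i + Suc k)) + (\<Sum>i<k. fA B i)"
    using sig_split[of B "Suc k"] assms(2) by (simp add: fA_def)
  have "wt k = (1/3)^Suc k" by (simp add: wt_def)
  then have "(\<Sum>i. fA B (i + Suc k)) < wt k" using tail_bounds(2)[of B "Suc k"]
    using zero_less_power[of "1/3::real" "Suc k"] by linarith
  then show ?thesis using A B eq tail_bounds(1)[of A "Suc k"] by linarith
qed

lemma inj_sig: "inj sig"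
proof (rule injI, rule ccontr)
  fix A B assume eq: "sig A = sig B" and ne: "A \<noteq> B"
  then have "\<exists>k. (k \<in> A) \<noteq> (k \<in> B)" by blast
  define k where "k = (LEAST k. (k \<in> A) \<noteq> (k \<in> B))"
  have k: "(k \<in> A) \<noteq> (k \<in> B)" unfolding k_def by (rule LeastI_ex) fact
  have lt: "\<And>i. i < k \<Longrightarrow> (i \<in> A) = (i \<in> B)" unfolding k_def using not_less_Least by blast
  show False
  proof (cases "k \<in> A")
    case True
    then have "k \<notin> B" using k by blast
    then have "sig B < sig A" using sig_less[of k A B] \<open>k \<in> A\<close> lt by blast
    then show ?thesis using eq by simp
  next
    case False
    then have "k \<in> B" using k by blast
    then have "sig A < sig B" using sig_less[of k B A] \<open>k \<notin> A\<close> lt by metis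
    then show ?thesis using eq by simp
  qed
qed

definition Ucov :: "nat \<Rightarrow> real set" where
  "Ucov n = (\<Union>T\<in>Pow {..<n}. {sum wt T .. sum wt T + (1/3)^n / 2})"

lemma sig_in_Ucov: "sig A \<in> Ucov n"
proof -
  have e: "(\<Sum>i<n. fA A i) = sum wt (A \<inter> {..<n})"
    using sum.inter_restrict[of "{..<n}" wt A] unfolding fA_def by (simp add: Int_commute)
  have "sig A \<in> {sum wt (A \<inter> {..<n}) .. sum wt (A \<inter> {..<n}) + (1/3)^n / 2}"
    unfolding atLeastAtMost_iff using sig_split[of A n] tail_bounds[of A n] e by linarith
  moreover have "A \<inter> {..<n} \<in> Pow {..<n}" by blast
  ultimately show ?thesis unfolding Ucov_def by blast
qed

lemma Ucov_lmeasurable: "Ucov n \<in> lmeasurable"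
  unfolding Ucov_def by (intro lmeasurable_compact compact_UN) auto

lemma Ucov_measure: "measure lebesgue (Ucov n) \<le> (2/3)^n / 2"
proof -
  have "measure lebesgue (Ucov n) \<le> (\<Sum>T\<in>Pow {..<n}. measure lebesgue {sum wt T .. sum wt T + (1/3)^n / 2})"
    unfolding Ucov_def by (intro measure_UNION_le) auto
  also have "\<dots> = (\<Sum>T\<in>Pow {..<n}. (1/3::real)^n / 2)"
    by (intro sum.cong) auto
  also have "\<dots> = 2^n * (1/3)^n / 2" by (simp add: card_Pow)
  also have "\<dots> = (2/3)^n / 2" by (simp add: power_divide)
  finally show ?thesis .
qed

lemma sig_range_null: "range sig \<in> null_sets lebesgue"
proof -
  have "negligible (range sig)"
    unfolding negligible_outer_le
  proof (intro allI impI)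
    fix e :: real assume "e > 0"
    have "(2/3::real) < 1" by simp
    then obtain n where n: "(2/3::real)^n < e" using real_arch_pow_inv[OF \<open>e > 0\<close>] by blast
    show "\<exists>T. range sig \<subseteq> T \<and> T \<in> lmeasurable \<and> measure lebesgue T \<le> e"
    proof (intro exI[of _ "Ucov n"] conjI)
      show "range sig \<subseteq> Ucov n" using sig_in_Ucov by blast
      show "Ucov n \<in> lmeasurable" by (rule Ucov_lmeasurable)
      have "0 \<le> measure lebesgue (Ucov n)" by (rule measure_nonneg)
      then show "measure lebesgue (Ucov n) \<le> e" using Ucov_measure[of n] n by linarith
    qed
  qed
  then show ?thesis using negligible_iff_null_sets by blast
qed



lemma real_inj_natset: obtains j0 :: "real \<Rightarrow> nat set" where "inj j0"
proof -
  have "(UNIV::real set) \<approx> (UNIV::nat set set)" using nat_sets_eqpoll_reals eqpoll_sym by blast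
  then obtain f :: "real \<Rightarrow> nat set" where "bij_betw f UNIV UNIV" unfolding eqpoll_def by blast
  then have "inj f" by (simp add: bij_betw_def)
  then show ?thesis using that by blast
qed

definition enc :: "(real \<Rightarrow> nat set) \<Rightarrow> (nat \<Rightarrow> real) \<times> nat \<times> (nat \<Rightarrow> bool) \<Rightarrow> nat set" where
  "enc j0 d = (case d of (p, n, b) \<Rightarrow>
     {prod_encode (0, n)} \<union> {prod_encode (1, i) | i. b i} \<union> {prod_encode (Suc (Suc i), m) | i m. m \<in> j0 (p i)})"

lemma enc_mem0: "prod_encode (0, m) \<in> enc j0 (p, n, b) \<longleftrightarrow> m = n"
  unfolding enc_def by (auto simp: prod_encode_eq)
lemma enc_mem1: "prod_encode (1, i) \<in> enc j0 (p, n, b) \<longleftrightarrow> b i"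
  unfolding enc_def by (auto simp: prod_encode_eq)
lemma enc_mem2: "prod_encode (Suc (Suc i), m) \<in> enc j0 (p, n, b) \<longleftrightarrow> m \<in> j0 (p i)"
  unfolding enc_def by (auto simp: prod_encode_eq)

lemma inj_enc: assumes "inj j0" shows "inj (enc j0)"
proof (rule injI)
  fix d d' assume eq: "enc j0 d = enc j0 d'"
  obtain p n b where d: "d = (p, n, b)" by (cases d) auto
  obtain p' n' b' where d': "d' = (p', n', b')" by (cases d') auto
  have "n = n'" using enc_mem0[of n j0 p n b] enc_mem0[of n j0 p' n' b'] eq d d' by simp
  moreover have "b = b'"
  proof
    fix i show "b i = b' i" using enc_mem1[of i j0 p n b] enc_mem1[of i j0 p' n' b'] eq d d' by simp
  qed
  moreover have "p = p'"
  proof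
    fix i
    have "j0 (p i) = j0 (p' i)"
    proof
      show "j0 (p i) \<subseteq> j0 (p' i)"
        using enc_mem2[of i _ j0 p n b] enc_mem2[of i _ j0 p' n' b'] eq d d' by blast
      show "j0 (p' i) \<subseteq> j0 (p i)"
        using enc_mem2[of i _ j0 p n b] enc_mem2[of i _ j0 p' n' b'] eq d d' by blast
    qed
    then show "p i = p' i" using assms by (simp add: inj_eq)
  qed
  ultimately show "d = d'" using d d' by simp
qed

lemma C_part:
  obtains C :: "real set" and P :: "real set \<Rightarrow> real set" where
    "C \<subseteq> {0..1}" "C \<in> null_sets lebesgue" "\<And>S. P S \<subseteq> C"
    "\<And>T j. finite T \<Longrightarrow> j \<in> T \<Longrightarrow> \<exists>x. x \<in> P j \<and> (\<forall>S\<in>T. S \<noteq> j \<longrightarrow> x \<notin> P S)"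
proof -
  obtain j0 :: "real \<Rightarrow> nat set" where j0: "inj j0" by (rule real_inj_natset)
  define e where "e = sig \<circ> enc j0"
  have inje: "inj e" unfolding e_def using inj_sig inj_enc[OF j0] by (rule inj_compose)
  define P where "P S = e ` {(p, n, b). \<forall>i<n. (p i \<in> S) = b i}" for S
  show ?thesis
  proof
    show "range sig \<subseteq> {0..1}" using sig_01 by blast
    show "range sig \<in> null_sets lebesgue" by (rule sig_range_null)
    fix S show "P S \<subseteq> range sig" unfolding P_def e_def by auto
  next
    fix T and j :: "real set" assume T: "finite T" "j \<in> T"
    obtain Ls where Ls: "set Ls = T - {j}" using finite_list[of "T - {j}"] T by blast
    define n where "n = length Ls"
    define p where "p i = (SOME y. (y \<in> j) \<noteq> (y \<in> Ls ! i))" for i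
    define b where "b i = (p i \<in> j)" for i
    have pp: "(p i \<in> j) \<noteq> (p i \<in> Ls ! i)" if "i < n" for i
    proof -
      have "Ls ! i \<in> set Ls" using that n_def by simp
      then have "Ls ! i \<noteq> j" using Ls by blast
      then have "\<exists>y. (y \<in> j) \<noteq> (y \<in> Ls ! i)" by blast
      then show ?thesis unfolding p_def by (rule someI_ex)
    qed
    have dj: "(p, n, b) \<in> {(p, n, b). \<forall>i<n. (p i \<in> j) = b i}" by (simp add: b_def)
    show "\<exists>x. x \<in> P j \<and> (\<forall>S\<in>T. S \<noteq> j \<longrightarrow> x \<notin> P S)"
    proof (intro exI conjI ballI impI)
      show "e (p, n, b) \<in> P j" unfolding P_def using dj by blast
    next
      fix S assume "S \<in> T" "S \<noteq> j"
      then have "S \<in> set Ls" using Ls by blast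
      then obtain i where i: "i < n" "S = Ls ! i" by (auto simp: in_set_conv_nth n_def)
      show "e (p, n, b) \<notin> P S"
      proof
        assume "e (p, n, b) \<in> P S"
        then obtain d where d: "d \<in> {(p, n, b). \<forall>i<n. (p i \<in> S) = b i}" "e (p, n, b) = e d"
          unfolding P_def by blast
        then have "d = (p, n, b)" using inje by (simp add: inj_eq)
        then have "(p i \<in> S) = b i" using d(1) i(1) by simp
        then show False using pp[OF i(1)] i(2) b_def by simp
      qed
    qed
  qed
qed



lemma integral_inv_a1:
  assumes "0 < a" "a \<le> 1"
  shows "((\<lambda>x::real. 1/x) has_integral (- ln a)) {a..1}"
proof -
  have "((\<lambda>x::real. 1/x) has_integral (ln 1 - ln a)) {a..1}"
  proof (rule fundamental_theorem_of_calculus)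
    show "a \<le> 1" by fact
    fix x assume "x \<in> {a..1}"
    then have "0 < x" using assms by auto
    then have "(ln has_real_derivative 1/x) (at x)" by (rule DERIV_ln_divide)
    then have "(ln has_real_derivative 1/x) (at x within {a..1})" by (rule has_field_derivative_at_within)
    then show "(ln has_vector_derivative 1/x) (at x within {a..1})"
      by (simp add: has_real_derivative_iff_has_vector_derivative)
  qed
  then show ?thesis by simp
qed

lemma not_integrable_inv: "\<not> integrable (lebesgue_on {0..1::real}) (\<lambda>x. 1/x)"
proof
  assume "integrable (lebesgue_on {0..1::real}) (\<lambda>x. 1/x)"
  then have I: "(\<lambda>x::real. 1/x) integrable_on {0..1}" by (rule integrable_on_lebesgue_on) simp
  define J where "J = integral {0..1::real} (\<lambda>x. 1/x)"
  define a where "a = exp (- (\<bar>J\<bar> + 1))"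
  have a0: "0 < a" by (simp add: a_def)
  have a1: "a \<le> 1" unfolding a_def by simp
  have la: "- ln a = \<bar>J\<bar> + 1" by (simp add: a_def)
  have "integral {a..1} (\<lambda>x::real. 1/x) = - ln a"
    using integral_inv_a1[OF a0 a1] by (rule integral_unique)
  moreover have "integral {a..1} (\<lambda>x::real. 1/x) \<le> J"
    unfolding J_def
  proof (rule integral_subset_le)
    show "{a..1} \<subseteq> {0..1::real}" using a0 by auto
    show "(\<lambda>x::real. 1/x) integrable_on {a..1}" using integral_inv_a1[OF a0 a1] by blast
    show "(\<lambda>x::real. 1/x) integrable_on {0..1}" by (rule I)
    show "\<forall>x\<in>{0..1::real}. 0 \<le> 1/x" by auto
  qed
  ultimately show False using la by linarith
qed



lemma inv_meas: "(\<lambda>x::real. 1/x) \<in> borel_measurable lebesgue"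
  by (intro borel_measurable_divide borel_measurable_const id_borel_measurable_lebesgue[unfolded id_def])

definition NN :: "'i rel \<Rightarrow> ('i \<Rightarrow> real set) \<Rightarrow> 'i \<Rightarrow> real set" where
  "NN \<kappa> g \<alpha> = \<Union>(g ` underS \<kappa> \<alpha>)"
definition QQ :: "'i rel \<Rightarrow> ('i \<Rightarrow> real set) \<Rightarrow> real set \<Rightarrow> 'i \<Rightarrow> real set" where
  "QQ \<kappa> g C \<alpha> = {0<..1} - C - NN \<kappa> g \<alpha>"
definition base :: "'i rel \<Rightarrow> ('i \<Rightarrow> real set) \<Rightarrow> real set \<Rightarrow> (real set \<Rightarrow> real set) \<Rightarrow> real set \<Rightarrow> 'i \<Rightarrow> real \<Rightarrow> real" where
  "base \<kappa> g C P S \<alpha> x = (if \<alpha> \<in> Field \<kappa> then indicator (P S) x + indicator (QQ \<kappa> g C \<alpha>) x * (1/x) else 0)"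

definition sbase :: "'i rel \<Rightarrow> ('i \<Rightarrow> real set) \<Rightarrow> real set \<Rightarrow> (real set \<Rightarrow> real set) \<Rightarrow> real \<Rightarrow> real set \<Rightarrow> 'i \<Rightarrow> real \<Rightarrow> real" where
  "sbase \<kappa> g C P \<sigma> S \<alpha> x = \<sigma> * base \<kappa> g C P S \<alpha> x"

context
  fixes \<kappa> :: "'i rel" and g :: "'i \<Rightarrow> real set" and C :: "real set" and P :: "real set \<Rightarrow> real set"
  assumes nemp: "Field \<kappa> \<noteq> {}"
    and nomax: "\<And>\<alpha>. \<alpha> \<in> Field \<kappa> \<Longrightarrow> \<exists>\<beta>\<in>Field \<kappa>. \<alpha> \<noteq> \<beta> \<and> (\<alpha>,\<beta>) \<in> \<kappa>"
    and gcov: "\<Union>(g ` Field \<kappa>) = {0..1}"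
    and Nnull: "\<And>\<alpha>. \<alpha> \<in> Field \<kappa> \<Longrightarrow> \<Union>(g ` underS \<kappa> \<alpha>) \<in> nullN"
    and C01: "C \<subseteq> {0..1}" and Cnull: "C \<in> null_sets lebesgue" and PC: "\<And>S. P S \<subseteq> C"
    and Psep: "\<And>T j. finite T \<Longrightarrow> j \<in> T \<Longrightarrow> \<exists>x. x \<in> P j \<and> (\<forall>S\<in>T. S \<noteq> j \<longrightarrow> x \<notin> P S)"
begin

lemma NN_null: "\<alpha> \<in> Field \<kappa> \<Longrightarrow> NN \<kappa> g \<alpha> \<in> null_sets lebesgue"
  using Nnull unfolding NN_def nullN_def by blast

lemma P_null: "P S \<in> null_sets lebesgue"
proof -
  have "negligible C" using Cnull negligible_iff_null_sets by blast
  then have "negligible (P S)" using PC negligible_subset by blast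
  then show ?thesis using negligible_iff_null_sets by blast
qed

lemma QQ_sets: "\<alpha> \<in> Field \<kappa> \<Longrightarrow> QQ \<kappa> g C \<alpha> \<in> sets lebesgue"
  unfolding QQ_def using NN_null Cnull by (intro sets.Diff) auto

lemma base_meas: "base \<kappa> g C P S \<alpha> \<in> borel_measurable lebesgue"
proof (cases "\<alpha> \<in> Field \<kappa>")
  case True
  have "(\<lambda>x. indicator (P S) x + indicator (QQ \<kappa> g C \<alpha>) x * (1/x) :: real) \<in> borel_measurable lebesgue"
    using P_null QQ_sets[OF True] inv_meas
    by (intro borel_measurable_add borel_measurable_times borel_measurable_indicator) auto
  then show ?thesis using True unfolding base_def by simp
next
  case False
  then show ?thesis unfolding base_def by simp
qed

lemma base_seq: "base \<kappa> g C P S \<in> seq_space \<kappa>"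
  unfolding seq_space_def mem_Collect_eq
proof (intro allI impI)
  fix \<alpha> x assume h: "\<alpha> \<notin> Field \<kappa> \<or> x \<notin> {0..1::real}"
  show "base \<kappa> g C P S \<alpha> x = 0"
  proof (cases "\<alpha> \<in> Field \<kappa>")
    case True
    then have "x \<notin> {0..1}" using h by blast
    then have "x \<notin> P S" "x \<notin> QQ \<kappa> g C \<alpha>" using PC[of S] C01 unfolding QQ_def by auto
    then show ?thesis unfolding base_def by simp
  qed (simp add: base_def)
qed

lemma base_on_P: "\<alpha> \<in> Field \<kappa> \<Longrightarrow> x \<in> C \<Longrightarrow> base \<kappa> g C P S \<alpha> x = indicator (P S) x"
  unfolding base_def QQ_def by (simp add: indicator_def)

lemma base_on_Q: "\<alpha> \<in> Field \<kappa> \<Longrightarrow> x \<in> QQ \<kappa> g C \<alpha> \<Longrightarrow> base \<kappa> g C P S \<alpha> x = 1/x"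
proof -
  assume "\<alpha> \<in> Field \<kappa>" "x \<in> QQ \<kappa> g C \<alpha>"
  moreover then have "x \<notin> P S" using PC unfolding QQ_def by blast
  ultimately show ?thesis unfolding base_def by simp
qed

lemma base_zero: "x \<notin> C \<Longrightarrow> x \<notin> QQ \<kappa> g C \<alpha> \<Longrightarrow> base \<kappa> g C P S \<alpha> x = 0"
proof -
  assume "x \<notin> C" "x \<notin> QQ \<kappa> g C \<alpha>"
  moreover then have "x \<notin> P S" using PC by blast
  ultimately show ?thesis unfolding base_def by simp
qed

lemma G_in:
  assumes T: "finite T" "T \<noteq> {}" and d: "\<And>S. S \<in> T \<Longrightarrow> d S > 0"
  shows "(\<lambda>\<alpha> x. \<Sum>S\<in>T. d S * base \<kappa> g C P S \<alpha> x) \<in> ANM \<kappa> - ND \<kappa>"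
proof -
  define G where "G = (\<lambda>\<alpha> x. \<Sum>S\<in>T. d S * base \<kappa> g C P S \<alpha> x)"
  define D where "D = sum d T"
  have Dpos: "D > 0" unfolding D_def using T d by (intro sum_pos) auto
  have GQ: "G \<alpha> x = D * (1/x)" if "\<alpha> \<in> Field \<kappa>" "x \<in> QQ \<kappa> g C \<alpha>" for \<alpha> x
  proof -
    have "G \<alpha> x = (\<Sum>S\<in>T. d S * (1/x))" unfolding G_def using base_on_Q[OF that] by simp
    also have "\<dots> = D * (1/x)" unfolding D_def by (simp add: sum_divide_distrib)
    finally show ?thesis .
  qed
  have G0: "G \<alpha> x = 0" if "x \<notin> C" "x \<notin> QQ \<kappa> g C \<alpha>" for \<alpha> x
    unfolding G_def using base_zero[OF that] by simp
  have Gmeas: "G \<alpha> \<in> borel_measurable L01" for \<alpha>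
  proof -
    have "G \<alpha> \<in> borel_measurable lebesgue"
      unfolding G_def using base_meas
      by (intro borel_measurable_sum borel_measurable_times borel_measurable_const) auto
    then show ?thesis by (rule measurable_restrict_space1)
  qed
  have s01: "{0..1::real} \<in> sets lebesgue" by simp
  have Cn: "C \<in> null_sets L01" using null_sets_restrict_space[OF s01] C01 Cnull by blast
  have NN01: "NN \<kappa> g \<alpha> \<subseteq> {0..1}" if "\<alpha> \<in> Field \<kappa>" for \<alpha>
    using Nnull[OF that] unfolding NN_def nullN_def by blast
  have QQ01: "QQ \<kappa> g C \<alpha> \<subseteq> {0..1}" for \<alpha> unfolding QQ_def by auto
  have measQ: "measure L01 (QQ \<kappa> g C \<alpha>) = 1" if "\<alpha> \<in> Field \<kappa>" for \<alpha>
  proof -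
    have "measure L01 (QQ \<kappa> g C \<alpha>) = measure lebesgue (QQ \<kappa> g C \<alpha>)"
      using QQ01 by (intro measure_restrict_space) auto
    also have "\<dots> = measure lebesgue ({0<..1::real} - C)"
      unfolding QQ_def using NN_null[OF that] Cnull by (intro measure_Diff_null_set) auto
    also have "\<dots> = measure lebesgue {0<..1::real}"
      using Cnull by (intro measure_Diff_null_set) auto
    also have "\<dots> = 1" by simp
    finally show ?thesis .
  qed
  have fm: "finite_measure L01" by (rule finite_measure_lebesgue_on) simp
  have kc: "kconv \<kappa> (\<lambda>\<alpha>. G \<alpha> x) ((\<lambda>x. 0) x)" if x: "x \<in> space L01" "x \<notin> C" for x
  proof -
    have "x \<in> \<Union>(g ` Field \<kappa>)" using gcov x by simp
    then obtain \<beta> where \<beta>: "\<beta> \<in> Field \<kappa>" "x \<in> g \<beta>" by blast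
    have Z: "G \<alpha> x = 0" if \<alpha>: "\<alpha> \<in> Field \<kappa>" "(\<beta>, \<alpha>) \<in> \<kappa>" "\<alpha> \<noteq> \<beta>" for \<alpha>
    proof -
      have "\<beta> \<in> underS \<kappa> \<alpha>" using \<alpha> by (auto simp: underS_def)
      then have "x \<in> NN \<kappa> g \<alpha>" unfolding NN_def using \<beta> by blast
      then have "x \<notin> QQ \<kappa> g C \<alpha>" unfolding QQ_def by blast
      then show "G \<alpha> x = 0" using G0 x(2) by blast
    qed
    show "kconv \<kappa> (\<lambda>\<alpha>. G \<alpha> x) ((\<lambda>x. 0) x)"
      unfolding kconv_def
    proof (intro allI impI)
      fix U :: "real set" assume U: "open U \<and> (\<lambda>x. 0) x \<in> U"
      show "\<exists>\<alpha>0\<in>Field \<kappa>. \<forall>\<alpha>\<in>Field \<kappa>. (\<alpha>0, \<alpha>) \<in> \<kappa> \<and> \<alpha> \<noteq> \<alpha>0 \<longrightarrow> G \<alpha> x \<in> U"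
      proof (rule bexI[OF _ \<beta>(1)], intro ballI impI)
        fix \<alpha> assume "\<alpha> \<in> Field \<kappa>" "(\<beta>, \<alpha>) \<in> \<kappa> \<and> \<alpha> \<noteq> \<beta>"
        then have "G \<alpha> x = 0" using Z by blast
        then show "G \<alpha> x \<in> U" using U by simp
      qed
    qed
  qed
  have ae: "kconv_ae \<kappa> G (\<lambda>x. 0)"
    unfolding kconv_ae_def by (rule AE_I'[OF Cn]) (use kc in blast)
  have nm: "\<not> kconv_meas \<kappa> G (\<lambda>x. 0)"
  proof
    assume "kconv_meas \<kappa> G (\<lambda>x. 0)"
    then have kcv: "kconv \<kappa> (\<lambda>\<alpha>. measure L01 {x \<in> space L01. D \<le> \<bar>G \<alpha> x - 0\<bar>}) 0"
      unfolding kconv_meas_def using Dpos by blast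
    have U1: "open {..<1::real} \<and> (0::real) \<in> {..<1}" by simp
    have "\<exists>\<alpha>0\<in>Field \<kappa>. \<forall>\<alpha>\<in>Field \<kappa>. (\<alpha>0, \<alpha>) \<in> \<kappa> \<and> \<alpha> \<noteq> \<alpha>0 \<longrightarrow>
         measure L01 {x \<in> space L01. D \<le> \<bar>G \<alpha> x - 0\<bar>} \<in> {..<1}"
      using mp[OF spec[OF kcv[unfolded kconv_def], of "{..<1}"] U1] .
    then obtain \<alpha>0 where a0: "\<alpha>0 \<in> Field \<kappa>"
      "\<And>\<alpha>. \<alpha> \<in> Field \<kappa> \<Longrightarrow> (\<alpha>0, \<alpha>) \<in> \<kappa> \<and> \<alpha> \<noteq> \<alpha>0 \<Longrightarrow>
         measure L01 {x \<in> space L01. D \<le> \<bar>G \<alpha> x - 0\<bar>} \<in> {..<1}"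
      by blast
    obtain \<alpha> where \<alpha>: "\<alpha> \<in> Field \<kappa>" "\<alpha>0 \<noteq> \<alpha>" "(\<alpha>0, \<alpha>) \<in> \<kappa>" using nomax[OF a0(1)] by blast
    have lt: "measure L01 {x \<in> space L01. D \<le> \<bar>G \<alpha> x - 0\<bar>} < 1" using a0(2)[OF \<alpha>(1)] \<alpha> by auto
    have sub: "QQ \<kappa> g C \<alpha> \<subseteq> {x \<in> space L01. D \<le> \<bar>G \<alpha> x - 0\<bar>}"
    proof
      fix x assume x: "x \<in> QQ \<kappa> g C \<alpha>"
      then have x01: "0 < x" "x \<le> 1" unfolding QQ_def by auto
      have "D \<le> D * (1/x)" using x01 Dpos by (simp add: field_simps)
      also have "\<dots> = \<bar>G \<alpha> x - 0\<bar>" using GQ[OF \<alpha>(1) x] x01 Dpos by simp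
      finally show "x \<in> {x \<in> space L01. D \<le> \<bar>G \<alpha> x - 0\<bar>}" using x01 by simp
    qed
    have sets: "{x \<in> space L01. D \<le> \<bar>G \<alpha> x - 0\<bar>} \<in> sets L01"
      using Gmeas[of \<alpha>] by (intro borel_measurable_le borel_measurable_const borel_measurable_abs borel_measurable_diff) auto
    have "measure L01 (QQ \<kappa> g C \<alpha>) \<le> measure L01 {x \<in> space L01. D \<le> \<bar>G \<alpha> x - 0\<bar>}"
      by (rule finite_measure.finite_measure_mono[OF fm sub sets])
    then show False using lt measQ[OF \<alpha>(1)] by simp
  qed
  have anm: "G \<in> ANM \<kappa>"
    unfolding ANM_def using Gmeas ae nm by auto
  have nd: "G \<notin> ND \<kappa>"
  proof
    assume "G \<in> ND \<kappa>"
    then obtain h where h: "integrable L01 h" "\<And>\<alpha>. \<alpha> \<in> Field \<kappa> \<Longrightarrow> AE x in L01. \<bar>G \<alpha> x\<bar> \<le> h x"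
      unfolding ND_def by blast
    obtain \<alpha> where \<alpha>: "\<alpha> \<in> Field \<kappa>" using nemp by blast
    have z: "{0::real} \<in> null_sets lebesgue" using negligible_sing negligible_iff_null_sets by blast
    have Z: "{0} \<union> C \<union> NN \<kappa> g \<alpha> \<in> null_sets L01"
      using null_sets_restrict_space[OF s01] C01 Cnull NN_null[OF \<alpha>] NN01[OF \<alpha>] z by auto
    have ae1: "AE x in L01. x \<notin> {0} \<union> C \<union> NN \<kappa> g \<alpha>"
      by (rule AE_I'[OF Z]) auto
    have "AE x in L01. norm (1/x) \<le> norm (h x / D)"
      using ae1 h(2)[OF \<alpha>] AE_space
    proof eventually_elim
      case (elim x)
      then have "x \<in> {0..1}" by simp
      then have xQ: "x \<in> QQ \<kappa> g C \<alpha>" using elim(1) unfolding QQ_def by auto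
      then have x0: "0 < x" unfolding QQ_def by auto
      have "\<bar>D * (1/x)\<bar> \<le> h x" using elim(2) GQ[OF \<alpha> xQ] by simp
      then have "D * (1/x) \<le> h x" using x0 Dpos by simp
      then have "1/x \<le> h x / D" using Dpos by (simp add: field_simps)
      moreover have "h x / D \<le> \<bar>h x\<bar> / D" using Dpos by (simp add: divide_right_mono)
      ultimately show ?case using x0 Dpos by simp
    qed
    note bnd = this
    have hi: "integrable L01 (\<lambda>x. h x / D)" using h(1) by (rule integrable_divide_zero)
    have mi: "(\<lambda>x::real. 1/x) \<in> borel_measurable L01" by (rule measurable_restrict_space1[OF inv_meas])
    have "integrable L01 (\<lambda>x::real. 1/x)" by (rule Bochner_Integration.integrable_bound[OF hi mi bnd])
    then show False using not_integrable_inv by blast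
  qed
  show ?thesis using anm nd unfolding G_def by blast
qed

lemma base_inj: "inj (base \<kappa> g C P)"
proof (rule injI)
  fix S S' assume eq: "base \<kappa> g C P S = base \<kappa> g C P S'"
  show "S = S'"
  proof (rule ccontr)
    assume ne: "S \<noteq> S'"
    obtain x where x: "x \<in> P S" "\<forall>R\<in>{S,S'}. R \<noteq> S \<longrightarrow> x \<notin> P R" using Psep[of "{S,S'}" S] by auto
    obtain \<alpha> where \<alpha>: "\<alpha> \<in> Field \<kappa>" using nemp by blast
    have xC: "x \<in> C" using PC x(1) by blast
    have "base \<kappa> g C P S \<alpha> x = 1" using base_on_P[OF \<alpha> xC] x(1) by simp
    moreover have "base \<kappa> g C P S' \<alpha> x = 0" using base_on_P[OF \<alpha> xC] x(2) ne by simp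
    ultimately show False using eq by simp
  qed
qed

lemma sbase_inj: assumes "\<sigma> \<noteq> 0" shows "inj (sbase \<kappa> g C P \<sigma>)"
proof (rule injI)
  fix S S' assume eq: "sbase \<kappa> g C P \<sigma> S = sbase \<kappa> g C P \<sigma> S'"
  have "base \<kappa> g C P S = base \<kappa> g C P S'"
  proof (intro ext)
    fix \<alpha> x
    have "\<sigma> * base \<kappa> g C P S \<alpha> x = \<sigma> * base \<kappa> g C P S' \<alpha> x"
      using fun_cong[OF fun_cong[OF eq, of \<alpha>], of x] unfolding sbase_def by simp
    then show "base \<kappa> g C P S \<alpha> x = base \<kappa> g C P S' \<alpha> x" using assms by simp
  qed
  then show "S = S'" using base_inj by (simp add: inj_eq)
qed

lemma sbase_seq: "sbase \<kappa> g C P \<sigma> S \<in> seq_space \<kappa>"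
  using base_seq[of S] unfolding seq_space_def sbase_def by simp

lemma sbase_indep_aux:
  fixes A :: "('i \<Rightarrow> real \<Rightarrow> real) set" and c :: "('i \<Rightarrow> real \<Rightarrow> real) \<Rightarrow> real"
  assumes "\<sigma> \<noteq> 0" and h: "finite A \<and> A \<subseteq> range (sbase \<kappa> g C P \<sigma>) \<and> lincomb c A = (\<lambda>\<alpha> x. 0)" and b: "b \<in> A"
  shows "c b = 0"
proof -
  have inj: "inj (sbase \<kappa> g C P \<sigma>)" by (rule sbase_inj[OF assms(1)])
  obtain j where j: "b = sbase \<kappa> g C P \<sigma> j" using h b by blast
  define T where "T = sbase \<kappa> g C P \<sigma> -` A"
  have fT: "finite T" unfolding T_def using h inj by (intro finite_vimageI) auto
  have jT: "j \<in> T" unfolding T_def using b j by simp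
  obtain x where x: "x \<in> P j" "\<forall>S\<in>T. S \<noteq> j \<longrightarrow> x \<notin> P S" using Psep[OF fT jT] by blast
  obtain \<alpha> where \<alpha>: "\<alpha> \<in> Field \<kappa>" using nemp by blast
  have xC: "x \<in> C" using PC x(1) by blast
  have val: "b' \<alpha> x = (if b' = b then \<sigma> else 0)" if b': "b' \<in> A" for b'
  proof -
    obtain S where S: "b' = sbase \<kappa> g C P \<sigma> S" using h b' by blast
    have ST: "S \<in> T" unfolding T_def using b' S by simp
    have "b' \<alpha> x = \<sigma> * indicator (P S) x" unfolding S sbase_def using base_on_P[OF \<alpha> xC] by simp
    moreover have "(b' = b) = (S = j)" unfolding S j using inj by (simp add: inj_eq)
    ultimately show ?thesis using x ST by (auto simp: indicator_def)
  qed
  have z: "lincomb c A \<alpha> x = 0" using h by simp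
  have e1: "lincomb c A \<alpha> x = (\<Sum>b'\<in>A. c b' * b' \<alpha> x)" unfolding lincomb_def by (rule refl)
  have e2: "(\<Sum>b'\<in>A. c b' * b' \<alpha> x) = (\<Sum>b'\<in>A. if b' = b then c b' * \<sigma> else 0)"
  proof (rule sum.cong[OF refl])
    fix b' assume "b' \<in> A"
    then show "c b' * b' \<alpha> x = (if b' = b then c b' * \<sigma> else 0)" using val[of b'] by simp
  qed
  have e3: "(\<Sum>b'\<in>A. if b' = b then c b' * \<sigma> else 0) = c b * \<sigma>"
    using h b by (simp add: sum.delta)
  have "c b * \<sigma> = 0" using z e1 e2 e3 by linarith
  then show "c b = 0" using assms(1) by simp
qed

lemma sbase_indep: assumes "\<sigma> \<noteq> 0" shows "lin_indep (range (sbase \<kappa> g C P \<sigma>))"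
  unfolding lin_indep_def using sbase_indep_aux[OF assms] by blast

lemma sbase_cone:
  assumes A: "finite A" "A \<noteq> {}" "A \<subseteq> range (sbase \<kappa> g C P \<sigma>)" and c: "\<And>b. b \<in> A \<Longrightarrow> c b * \<sigma> > 0"
  shows "lincomb c A \<in> ANM \<kappa> - ND \<kappa>"
proof -
  obtain b0 where b0: "b0 \<in> A" using A(2) by blast
  have "\<sigma> \<noteq> 0" using c[OF b0] by auto
  then have inj: "inj (sbase \<kappa> g C P \<sigma>)" by (rule sbase_inj)
  define T where "T = sbase \<kappa> g C P \<sigma> -` A"
  have fT: "finite T" unfolding T_def using A inj by (intro finite_vimageI) auto
  have AT: "A = sbase \<kappa> g C P \<sigma> ` T" unfolding T_def using A(3) by blast
  have Tne: "T \<noteq> {}" using AT A(2) by blast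
  have ij: "inj_on (sbase \<kappa> g C P \<sigma>) T" using inj by (rule inj_on_subset) simp
  have "lincomb c A = (\<lambda>\<alpha> x. \<Sum>S\<in>T. (c (sbase \<kappa> g C P \<sigma> S) * \<sigma>) * base \<kappa> g C P S \<alpha> x)"
  proof (intro ext)
    fix \<alpha> x
    have "lincomb c A \<alpha> x = (\<Sum>b\<in>A. c b * b \<alpha> x)" unfolding lincomb_def by (rule refl)
    also have "\<dots> = (\<Sum>b\<in>sbase \<kappa> g C P \<sigma> ` T. c b * b \<alpha> x)" using AT by (rule arg_cong)
    also have "\<dots> = (\<Sum>S\<in>T. c (sbase \<kappa> g C P \<sigma> S) * sbase \<kappa> g C P \<sigma> S \<alpha> x)"
      using sum.reindex[OF ij, of "\<lambda>b. c b * b \<alpha> x"] by (simp add: o_def)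
    also have "\<dots> = (\<Sum>S\<in>T. (c (sbase \<kappa> g C P \<sigma> S) * \<sigma>) * base \<kappa> g C P S \<alpha> x)"
      unfolding sbase_def by (simp add: mult.assoc)
    finally show "lincomb c A \<alpha> x = (\<Sum>S\<in>T. (c (sbase \<kappa> g C P \<sigma> S) * \<sigma>) * base \<kappa> g C P S \<alpha> x)" .
  qed
  also have "\<dots> \<in> ANM \<kappa> - ND \<kappa>"
  proof (rule G_in[OF fT Tne])
    fix S assume "S \<in> T"
    then have "sbase \<kappa> g C P \<sigma> S \<in> A" unfolding T_def by simp
    then show "c (sbase \<kappa> g C P \<sigma> S) * \<sigma> > 0" by (rule c)
  qed
  finally show ?thesis .
qed

end


theorem mainTheorem10:
  fixes \<kappa> :: "'i rel"
  assumes "card_order_on (Field \<kappa>) \<kappa>"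
    and "is_addN (Field \<kappa>)"
    and "is_covN (Field \<kappa>)"
  shows "coneable (Pow (UNIV :: real set)) \<kappa> (ANM \<kappa> - ND \<kappa>)"
proof -
  obtain g where g: "\<And>\<alpha>. \<alpha> \<in> Field \<kappa> \<Longrightarrow> g \<alpha> \<in> nullN"
    "\<Union>(g ` Field \<kappa>) = {0..1}"
    "\<And>\<alpha>. \<alpha> \<in> Field \<kappa> \<Longrightarrow> \<Union>(g ` underS \<kappa> \<alpha>) \<in> nullN"
    "Field \<kappa> \<noteq> {}"
    "\<And>\<alpha>. \<alpha> \<in> Field \<kappa> \<Longrightarrow> \<exists>\<beta>\<in>Field \<kappa>. \<alpha> \<noteq> \<beta> \<and> (\<alpha>,\<beta>) \<in> \<kappa>"
    using card_part[OF assms] by metis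
  obtain C :: "real set" and P :: "real set \<Rightarrow> real set" where CP:
    "C \<subseteq> {0..1}" "C \<in> null_sets lebesgue" "\<And>S. P S \<subseteq> C"
    "\<And>T j. finite T \<Longrightarrow> j \<in> T \<Longrightarrow> \<exists>x. x \<in> P j \<and> (\<forall>S\<in>T. S \<noteq> j \<longrightarrow> x \<notin> P S)"
    using C_part by blast
  note ctx = g(4) g(5) g(2) g(3) CP(1) CP(2) CP(3) CP(4)
  have card: "(card_of (range (sbase \<kappa> g C P \<sigma>)), card_of (Pow (UNIV :: real set))) \<in> ordIso"
    if "\<sigma> \<noteq> 0" for \<sigma>
  proof -
    have "bij_betw (sbase \<kappa> g C P \<sigma>) UNIV (range (sbase \<kappa> g C P \<sigma>))"
      by (rule inj_on_imp_bij_betw[OF sbase_inj[OF ctx that]])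
    then have "(card_of (UNIV :: real set set), card_of (range (sbase \<kappa> g C P \<sigma>))) \<in> ordIso"
      using card_of_ordIso by blast
    then show ?thesis using ordIso_symmetric by simp
  qed
  show ?thesis
    unfolding coneable_def
  proof (intro exI conjI)
    show "range (sbase \<kappa> g C P 1) \<subseteq> seq_space \<kappa>" using sbase_seq[OF ctx] by blast
    show "range (sbase \<kappa> g C P (-1)) \<subseteq> seq_space \<kappa>" using sbase_seq[OF ctx] by blast
    show "lin_indep (range (sbase \<kappa> g C P 1))" using sbase_indep[OF ctx, of "1::real"] by simp
    show "lin_indep (range (sbase \<kappa> g C P (-1)))" using sbase_indep[OF ctx, of "-1::real"] by simp
    show "(card_of (range (sbase \<kappa> g C P 1)), card_of (Pow (UNIV :: real set))) \<in> ordIso" using card[of "1::real"] by simp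
    show "(card_of (range (sbase \<kappa> g C P (-1))), card_of (Pow (UNIV :: real set))) \<in> ordIso" using card[of "-1::real"] by simp
    show "\<forall>A c. finite A \<and> A \<noteq> {} \<and> A \<subseteq> range (sbase \<kappa> g C P 1) \<and> (\<forall>b\<in>A. c b > 0) \<longrightarrow> lincomb c A \<in> ANM \<kappa> - ND \<kappa>"
    proof (intro allI impI)
      fix A c assume h: "finite A \<and> A \<noteq> {} \<and> A \<subseteq> range (sbase \<kappa> g C P 1) \<and> (\<forall>b\<in>A. (c b :: real) > 0)"
      show "lincomb c A \<in> ANM \<kappa> - ND \<kappa>"
        by (rule sbase_cone[OF ctx, where \<sigma>=1]) (use h in auto)
    qed
    show "\<forall>A c. finite A \<and> A \<noteq> {} \<and> A \<subseteq> range (sbase \<kappa> g C P (-1)) \<and> (\<forall>b\<in>A. c b < 0) \<longrightarrow> lincomb c A \<in> ANM \<kappa> - ND \<kappa>"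
    proof (intro allI impI)
      fix A c assume h: "finite A \<and> A \<noteq> {} \<and> A \<subseteq> range (sbase \<kappa> g C P (-1)) \<and> (\<forall>b\<in>A. (c b :: real) < 0)"
      show "lincomb c A \<in> ANM \<kappa> - ND \<kappa>"
        by (rule sbase_cone[OF ctx, where \<sigma>="-1"]) (use h in auto)
    qed
  qed
qed


end
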